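(* Let $N_1$ and $N_2$ be phylogenetic networks on the same set $S$ of taxa. Then $m(N_1,N_2)\ge d_\mu(N_1,N_2)$.
   Context: A phylogenetic network on $S=\{1,\dots,n\}$ is a finite rooted directed acyclic graph whose leaves are bijectively labeled by $S$. For a node $v$, $\mu(v)=(m_1(v),\dots,m_n(v))$ where $m_i(v)$ is the number of directed paths from $v$ to leaf $i$; $\mu(N)$ is the multiset $\{\mu(v)\}$ over all nodes, and $d_\mu(N_1,N_2)=\frac12|\mu(N_1)\bigtriangleup\mu(N_2)|$. The nested label $\ell(v)$ is defined by induction on height: $\ell(v)=\{i\}$ for the leaf labeled $i$, otherwise the multiset of nested labels of the children of $v$; $\Upsilon(N)$ is the multiset of nested labels of all nodes, and $m(N_1,N_2)=\frac12|\Upsilon(N_1)\bigtriangleup\Upsilon(N_2)|$. Here $\bigtriangleup$ is multiset symmetric difference (multiplicity $|M_1(x)-M_2(x)|$) and $|\cdot|$ is the sum of multiplicities. *)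

theory Defs
  imports Complex_Main "HOL-Library.Multiset"
begin

definition leaves :: "'a set \<Rightarrow> ('a \<times> 'a) set \<Rightarrow> 'a set" where
  "leaves V E = {v \<in> V. \<forall>w. (v, w) \<notin> E}"

definition phylo_net :: "nat \<Rightarrow> 'a set \<Rightarrow> ('a \<times> 'a) set \<Rightarrow> ('a \<Rightarrow> nat) \<Rightarrow> bool" where
  "phylo_net n V E lab \<longleftrightarrow>
     finite V \<and> E \<subseteq> V \<times> V \<and>
     (\<forall>v. (v, v) \<notin> E\<^sup>+) \<and>
     (\<exists>r\<in>V. \<forall>v\<in>V. (r, v) \<in> E\<^sup>*) \<and>
     bij_betw lab (leaves V E) {1..n}"

text \<open>Directed paths from v to w, as nonempty vertex lists (the graph has no parallel arcs).\<close>
definition dpaths :: "('a \<times> 'a) set \<Rightarrow> 'a \<Rightarrow> 'a \<Rightarrow> 'a list set" where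
  "dpaths E v w = {p. p \<noteq> [] \<and> hd p = v \<and> last p = w \<and>
                      (\<forall>j. Suc j < length p \<longrightarrow> (p ! j, p ! Suc j) \<in> E)}"

definition mcount :: "'a set \<Rightarrow> ('a \<times> 'a) set \<Rightarrow> ('a \<Rightarrow> nat) \<Rightarrow> nat \<Rightarrow> 'a \<Rightarrow> nat" where
  "mcount V E lab i v = card (\<Union>u\<in>{u \<in> leaves V E. lab u = i}. dpaths E v u)"

definition mu_vec :: "nat \<Rightarrow> 'a set \<Rightarrow> ('a \<times> 'a) set \<Rightarrow> ('a \<Rightarrow> nat) \<Rightarrow> 'a \<Rightarrow> nat list" where
  "mu_vec n V E lab v = map (\<lambda>i. mcount V E lab i v) [1..<Suc n]"

definition mu_rep :: "nat \<Rightarrow> 'a set \<Rightarrow> ('a \<times> 'a) set \<Rightarrow> ('a \<Rightarrow> nat) \<Rightarrow> nat list multiset" where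
  "mu_rep n V E lab = image_mset (mu_vec n V E lab) (mset_set V)"

text \<open>Nested labels: a leaf gets {i} (here NLeaf i), an internal node the multiset of its children's labels.\<close>
datatype nlabel = NLeaf nat | NNode "nlabel multiset"

text \<open>Recursion on height, with fuel k; fuel card V exceeds the height of every node of a DAG.\<close>
fun nlab_fuel :: "nat \<Rightarrow> 'a set \<Rightarrow> ('a \<times> 'a) set \<Rightarrow> ('a \<Rightarrow> nat) \<Rightarrow> 'a \<Rightarrow> nlabel" where
  "nlab_fuel 0 V E lab v = NNode {#}"
| "nlab_fuel (Suc k) V E lab v =
     (if v \<in> leaves V E then NLeaf (lab v)
      else NNode (image_mset (nlab_fuel k V E lab) (mset_set {w. (v, w) \<in> E})))"

definition nlab :: "'a set \<Rightarrow> ('a \<times> 'a) set \<Rightarrow> ('a \<Rightarrow> nat) \<Rightarrow> 'a \<Rightarrow> nlabel" where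
  "nlab V E lab v = nlab_fuel (card V) V E lab v"

definition upsilon :: "'a set \<Rightarrow> ('a \<times> 'a) set \<Rightarrow> ('a \<Rightarrow> nat) \<Rightarrow> nlabel multiset" where
  "upsilon V E lab = image_mset (nlab V E lab) (mset_set V)"

definition msymdiff :: "'b multiset \<Rightarrow> 'b multiset \<Rightarrow> 'b multiset" where
  "msymdiff A B = (A - B) + (B - A)"

definition d_mu :: "nat \<Rightarrow> 'a set \<Rightarrow> ('a \<times> 'a) set \<Rightarrow> ('a \<Rightarrow> nat) \<Rightarrow>
                    'b set \<Rightarrow> ('b \<times> 'b) set \<Rightarrow> ('b \<Rightarrow> nat) \<Rightarrow> real" where
  "d_mu n V1 E1 l1 V2 E2 l2 = real (size (msymdiff (mu_rep n V1 E1 l1) (mu_rep n V2 E2 l2))) / 2"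

definition m_dist :: "'a set \<Rightarrow> ('a \<times> 'a) set \<Rightarrow> ('a \<Rightarrow> nat) \<Rightarrow>
                    'b set \<Rightarrow> ('b \<times> 'b) set \<Rightarrow> ('b \<Rightarrow> nat) \<Rightarrow> real" where
  "m_dist V1 E1 l1 V2 E2 l2 = real (size (msymdiff (upsilon V1 E1 l1) (upsilon V2 E2 l2))) / 2"

end

theory Submission imports Defs begin
primrec cnt :: "nat \<Rightarrow> nlabel \<Rightarrow> nat" where
  "cnt i (NLeaf j) = (if i = j then 1 else 0)"
| "cnt i (NNode M) = sum_mset (image_mset (cnt i) M)"

lemma msd: "size (msymdiff (image_mset f A) (image_mset f B)) \<le> size (msymdiff A B)"
proof -
  define C where "C = A \<inter># B"
  have A: "A = C + (A - B)" unfolding C_def by (simp add: multiset_eq_iff; arith)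
  have B: "B = C + (B - A)" unfolding C_def by (simp add: multiset_eq_iff; arith)
  have eq: "msymdiff (image_mset f A) (image_mset f B) = msymdiff (image_mset f (A - B)) (image_mset f (B - A))"
  proof -
    have "image_mset f A = image_mset f C + image_mset f (A - B)" by (subst A) simp
    moreover have "image_mset f B = image_mset f C + image_mset f (B - A)" by (subst B) simp
    ultimately show ?thesis unfolding msymdiff_def by simp
  qed
  have bnd: "size (msymdiff X Y) \<le> size X + size Y" for X Y
    unfolding msymdiff_def unfolding size_union by (intro add_mono size_mset_mono diff_subset_eq_self) 
  have "size (msymdiff (image_mset f A) (image_mset f B)) \<le> size (image_mset f (A - B)) + size (image_mset f (B - A))"
    unfolding eq by (rule bnd)
  then show ?thesis unfolding msymdiff_def by simp
qed
lemma leaf_paths: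
  assumes "v \<in> leaves V E"
  shows "dpaths E v u = (if u = v then {[v]} else {})"
proof -
  have noe: "(v, w) \<notin> E" for w using assms by (simp add: leaves_def)
  have "p = [v]" if "p \<in> dpaths E v u" for p
  proof -
    have p: "p \<noteq> []" "hd p = v" "\<forall>j. Suc j < length p \<longrightarrow> (p ! j, p ! Suc j) \<in> E"
      using that by (auto simp: dpaths_def)
    have "\<not> Suc 0 < length p"
    proof
      assume "Suc 0 < length p"
      then have "(p ! 0, p ! Suc 0) \<in> E" using p(3) by blast
      moreover have "p ! 0 = v" using p(1,2) by (simp add: hd_conv_nth)
      ultimately show False using noe by simp
    qed
    then have "length p = 1" using p(1) by (cases p) auto
    then show ?thesis using p(1,2) by (cases p) auto
  qed
  moreover have "[v] \<in> dpaths E v v" by (simp add: dpaths_def)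
  moreover have "last p = u" if "p \<in> dpaths E v u" for p using that by (simp add: dpaths_def)
  ultimately have A: "dpaths E v u \<subseteq> {[v]}" and B: "dpaths E v u \<subseteq> {p. last p = u}"
    by blast+
  show ?thesis
  proof (cases "u = v")
    case True
    then show ?thesis using A \<open>[v] \<in> dpaths E v v\<close> by auto
  next
    case False
    then show ?thesis using A B by auto
  qed
qed

lemma int_paths:
  assumes "(v, w0) \<in> E" and "u \<in> leaves V E"
  shows "dpaths E v u = (\<Union>w\<in>{w. (v, w) \<in> E}. (Cons v) ` dpaths E w u)"
proof
  have ul: "(u, w) \<notin> E" for w using assms(2) by (simp add: leaves_def)
  show "dpaths E v u \<subseteq> (\<Union>w\<in>{w. (v, w) \<in> E}. (Cons v) ` dpaths E w u)"
  proof
    fix p assume "p \<in> dpaths E v u"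
    then have p: "p \<noteq> []" "hd p = v" "last p = u" "\<forall>j. Suc j < length p \<longrightarrow> (p ! j, p ! Suc j) \<in> E"
      by (auto simp: dpaths_def)
    then obtain q where pq: "p = v # q" by (cases p) auto
    have "q \<noteq> []" using pq p(3) ul assms(1) by auto
    have e: "(v, hd q) \<in> E" using p(4)[rule_format, of 0] pq \<open>q \<noteq> []\<close> by (simp add: hd_conv_nth)
    have "q \<in> dpaths E (hd q) u"
      unfolding dpaths_def using \<open>q \<noteq> []\<close> p(3,4) pq by auto
    then show "p \<in> (\<Union>w\<in>{w. (v, w) \<in> E}. (Cons v) ` dpaths E w u)" using e pq by blast
  qed
next
  show "(\<Union>w\<in>{w. (v, w) \<in> E}. (Cons v) ` dpaths E w u) \<subseteq> dpaths E v u"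
  proof clarify
    fix w q assume e: "(v, w) \<in> E" and q: "q \<in> dpaths E w u"
    then have q': "q \<noteq> []" "hd q = w" "last q = u" "\<forall>j. Suc j < length q \<longrightarrow> (q ! j, q ! Suc j) \<in> E"
      by (auto simp: dpaths_def)
    have "\<forall>j. Suc j < length (v # q) \<longrightarrow> ((v # q) ! j, (v # q) ! Suc j) \<in> E"
    proof (intro allI impI)
      fix j assume "Suc j < length (v # q)"
      then show "((v # q) ! j, (v # q) ! Suc j) \<in> E"
        using e q' by (cases j) (auto simp: hd_conv_nth)
    qed
    then show "v # q \<in> dpaths E v u" using q' by (simp add: dpaths_def)
  qed
qed


definition PS :: "'a set \<Rightarrow> ('a \<times> 'a) set \<Rightarrow> ('a \<Rightarrow> nat) \<Rightarrow> nat \<Rightarrow> 'a \<Rightarrow> 'a list set" where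
  "PS V E lab i v = (\<Union>u\<in>{u \<in> leaves V E. lab u = i}. dpaths E v u)"

lemma PS_leaf:
  assumes "v \<in> leaves V E"
  shows "PS V E lab i v = (if lab v = i then {[v]} else {})"
  using assms unfolding PS_def by (auto simp: leaf_paths split: if_splits)

lemma PS_int:
  assumes "(v, w0) \<in> E"
  shows "PS V E lab i v = (\<Union>w\<in>{w. (v, w) \<in> E}. (Cons v) ` PS V E lab i w)"
  proof -
  have "\<And>u. u \<in> leaves V E \<Longrightarrow> dpaths E v u = (\<Union>w\<in>{w. (v, w) \<in> E}. (Cons v) ` dpaths E w u)"
    using int_paths[OF assms] by blast
  then show ?thesis unfolding PS_def by auto
qed

lemma PS_hd: "p \<in> PS V E lab i w \<Longrightarrow> p \<noteq> [] \<and> hd p = w"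
  unfolding PS_def dpaths_def by auto

lemma main_ind:
  assumes fin: "finite V" and EV: "E \<subseteq> V \<times> V" and acyc: "\<forall>v. (v, v) \<notin> E\<^sup>+"
  shows "\<forall>v\<in>V. card {w. (v, w) \<in> E\<^sup>+} < k \<longrightarrow>
           finite (PS V E lab i v) \<and> card (PS V E lab i v) = cnt i (nlab_fuel k V E lab v)"
proof (induction k)
  case 0
  then show ?case by simp
next
  case (Suc k)
  show ?case
  proof (intro ballI impI)
    fix v assume vV: "v \<in> V" and cR: "card {w. (v, w) \<in> E\<^sup>+} < Suc k"
    show "finite (PS V E lab i v) \<and> card (PS V E lab i v) = cnt i (nlab_fuel (Suc k) V E lab v)"
    proof (cases "v \<in> leaves V E")
      case True
      then show ?thesis by (simp add: PS_leaf)
    next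
      case False
      then obtain w0 where w0: "(v, w0) \<in> E" using vV by (auto simp: leaves_def)
      define C where "C = {w. (v, w) \<in> E}"
      have CV: "C \<subseteq> V" using EV by (auto simp: C_def)
      have finC: "finite C" using CV fin finite_subset by blast
      have tV: "E\<^sup>+ \<subseteq> V \<times> V" using EV by (rule trancl_subset_Sigma)
      have IH: "finite (PS V E lab i w) \<and> card (PS V E lab i w) = cnt i (nlab_fuel k V E lab w)"
        if "w \<in> C" for w
      proof -
        have sub: "{x. (w, x) \<in> E\<^sup>+} \<subset> {x. (v, x) \<in> E\<^sup>+}"
        proof
          show "{x. (w, x) \<in> E\<^sup>+} \<subseteq> {x. (v, x) \<in> E\<^sup>+}"
            using that by (auto simp: C_def intro: trancl_into_trancl2)
          have "w \<in> {x. (v, x) \<in> E\<^sup>+}" using that by (auto simp: C_def)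
          moreover have "w \<notin> {x. (w, x) \<in> E\<^sup>+}" using acyc by auto
          ultimately show "{x. (w, x) \<in> E\<^sup>+} \<noteq> {x. (v, x) \<in> E\<^sup>+}" by blast
        qed
        have "finite {x. (v, x) \<in> E\<^sup>+}" using tV fin by (auto intro: finite_subset)
        then have "card {x. (w, x) \<in> E\<^sup>+} < card {x. (v, x) \<in> E\<^sup>+}"
          using sub by (rule psubset_card_mono)
        then show ?thesis using Suc.IH that CV cR by auto
      qed
      have eq: "PS V E lab i v = (\<Union>w\<in>C. (Cons v) ` PS V E lab i w)"
        unfolding C_def by (rule PS_int[OF w0])
      have fin2: "finite (PS V E lab i v)" unfolding eq using finC IH by blast
      have disj: "(Cons v) ` PS V E lab i w1 \<inter> (Cons v) ` PS V E lab i w2 = {}"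
        if "w1 \<noteq> w2" for w1 w2
      proof -
        have "p1 \<noteq> p2" if "p1 \<in> PS V E lab i w1" "p2 \<in> PS V E lab i w2" for p1 p2
          using PS_hd[OF that(1)] PS_hd[OF that(2)] \<open>w1 \<noteq> w2\<close> by metis
        then show ?thesis by blast
      qed
      have nf: "nlab_fuel (Suc k) V E lab v = NNode (image_mset (nlab_fuel k V E lab) (mset_set C))"
        using False by (simp add: C_def)
      have "card (PS V E lab i v) = (\<Sum>w\<in>C. card ((Cons v) ` PS V E lab i w))"
        unfolding eq
        by (rule card_UN_disjoint[OF finC]) (use IH disj in \<open>blast+\<close>)
      also have "\<dots> = (\<Sum>w\<in>C. cnt i (nlab_fuel k V E lab w))"
        by (rule sum.cong) (auto simp: card_image IH)
      also have "\<dots> = sum_mset (image_mset (cnt i) (image_mset (nlab_fuel k V E lab) (mset_set C)))"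
        by (simp only: sum_unfold_sum_mset image_mset.compositionality o_def)
      also have "\<dots> = cnt i (nlab_fuel (Suc k) V E lab v)"
        by (simp only: nf cnt.simps)
      finally show ?thesis using fin2 by simp

    qed
  qed
qed


definition FF :: "nat \<Rightarrow> nlabel \<Rightarrow> nat list" where
  "FF n L = map (\<lambda>i. cnt i L) [1..<Suc n]"

lemma mu_rep_eq:
  assumes "phylo_net n V E lab"
  shows "mu_rep n V E lab = image_mset (FF n) (upsilon V E lab)"
proof -
  have fin: "finite V" and EV: "E \<subseteq> V \<times> V" and acyc: "\<forall>v. (v, v) \<notin> E\<^sup>+"
    using assms by (auto simp: phylo_net_def)
  have tV: "E\<^sup>+ \<subseteq> V \<times> V" using EV by (rule trancl_subset_Sigma)
  have mv: "mu_vec n V E lab v = FF n (nlab V E lab v)" if vV: "v \<in> V" for v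
  proof -
    have "{w. (v, w) \<in> E\<^sup>+} \<subset> V" using tV acyc vV by auto
    then have "card {w. (v, w) \<in> E\<^sup>+} < card V" using fin by (rule psubset_card_mono[rotated])
    then have "card (PS V E lab i v) = cnt i (nlab V E lab v)" for i
      using main_ind[OF fin EV acyc, of "card V" lab i] vV unfolding nlab_def by blast
    then have "mcount V E lab i v = cnt i (nlab V E lab v)" for i
      unfolding mcount_def PS_def by blast
    then show ?thesis unfolding mu_vec_def FF_def by simp
  qed
  show ?thesis unfolding mu_rep_def upsilon_def image_mset.compositionality
  proof (rule image_mset_cong)
    fix x assume "x \<in># mset_set V"
    then have "x \<in> V" using fin by simp
    then show "mu_vec n V E lab x = (FF n \<circ> nlab V E lab) x" using mv by simp
  qed
qed

theorem proposition5:
  fixes V1 :: "'a set" and E1 :: "('a \<times> 'a) set" and l1 :: "'a \<Rightarrow> nat"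
    and V2 :: "'b set" and E2 :: "('b \<times> 'b) set" and l2 :: "'b \<Rightarrow> nat"
    and n :: nat
  assumes "phylo_net n V1 E1 l1" and "phylo_net n V2 E2 l2"
  shows "m_dist V1 E1 l1 V2 E2 l2 \<ge> d_mu n V1 E1 l1 V2 E2 l2"
  unfolding m_dist_def d_mu_def mu_rep_eq[OF assms(1)] mu_rep_eq[OF assms(2)]
proof (rule divide_right_mono)
  show "real (size (msymdiff (image_mset (FF n) (upsilon V1 E1 l1)) (image_mset (FF n) (upsilon V2 E2 l2))))
      \<le> real (size (msymdiff (upsilon V1 E1 l1) (upsilon V2 E2 l2)))"
    by (rule of_nat_mono, rule msd)
qed simp

end
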